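(* Let $X\subset\mathbb{R}^2$ be a standard Peano continuum, $(Y,d)$ a metric space and $f:X\to Y$ a map. Let $\{x_n\}$ be a sequence of distinct points of $X$ such that each $x_n$ lies on some isolated boundary circle $C_m\subset\mathrm{Fr}(X)$ and each such circle contains at most finitely many of the $x_n$. Let $\{y_n\}$ be a sequence in $\mathrm{im}(f)$ with $d(f(x_n),y_n)\to0$. Then there exists a map $\hat f:X\to Y$ homotopic to $f$ with $\hat f(x_n)=y_n$ for all $n$.
   Context: A Peano continuum is a compact, connected, locally path connected metric space. For $X\subset\mathbb{R}^2$, $\mathrm{int}(X)$ is the largest open subset of $\mathbb{R}^2$ contained in $X$ and $\mathrm{Fr}(X)=X\setminus\mathrm{int}(X)$. A 2-dimensional Peano continuum $X\subset\mathbb{R}^2$ is standard if for each component $U$ of $\mathbb{R}^2\setminus X$, $\partial U$ is a round Euclidean circle isolated in $\mathrm{Fr}(X)$; these circles $\partial U$ are the isolated boundary circles of $\mathrm{Fr}(X)$. *)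

theory Defs
  imports "HOL-Analysis.Analysis"
begin

definition peano_continuum :: "'a::metric_space set \<Rightarrow> bool" where
  "peano_continuum X \<longleftrightarrow> X \<noteq> {} \<and> compact X \<and> connected X \<and> locally path_connected X"

definition Fr :: "(real^2) set \<Rightarrow> (real^2) set" where
  "Fr X = X - interior X"

text \<open>A Peano continuum in the plane is 2-dimensional iff it has nonempty interior.\<close>
definition two_dim_peano_continuum :: "(real^2) set \<Rightarrow> bool" where
  "two_dim_peano_continuum X \<longleftrightarrow> peano_continuum X \<and> interior X \<noteq> {}"

definition round_circle :: "(real^2) set \<Rightarrow> bool" where
  "round_circle C \<longleftrightarrow> (\<exists>c r. r > 0 \<and> C = sphere c r)"

text \<open>A subset C of Fr(X) is isolated in Fr(X) iff it is open in Fr(X).\<close>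
definition standard_peano_continuum :: "(real^2) set \<Rightarrow> bool" where
  "standard_peano_continuum X \<longleftrightarrow> two_dim_peano_continuum X \<and>
     (\<forall>U \<in> components (- X). round_circle (frontier U) \<and>
         openin (top_of_set (Fr X)) (frontier U))"

definition isolated_boundary_circles :: "(real^2) set \<Rightarrow> (real^2) set set" where
  "isolated_boundary_circles X = {frontier U | U. U \<in> components (- X)}"

end

theory Submission
  imports Defs
begin


lemma inner2: "(x::real^2) \<bullet> y = x$1*y$1 + x$2*y$2"
  by (simp add: inner_vec_def sum_2)

lemma circle_rigid:
  fixes c c' z :: "real^2"
  assumes r': "r' > 0" and ep: "\<epsilon> > 0" and z: "z \<in> sphere c' r'"
    and sub: "sphere c' r' \<inter> ball z \<epsilon> \<subseteq> sphere c r"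
  shows "c = c'"
proof -
  define e where "e = z - c'"
  have ne: "norm e = r'" using z by (simp add: e_def dist_norm norm_minus_commute)
  define w :: "real^2" where "w = (\<chi> i. if i = 1 then -(e$2) else e$1)"
  have w1: "w$1 = -(e$2)" "w$2 = e$1" by (simp_all add: w_def)
  have ew: "e \<bullet> w = 0" by (simp add: inner2 w1)
  have ww: "w \<bullet> w = e \<bullet> e" by (simp add: inner2 w1 algebra_simps)
  have ee: "e \<bullet> e = r'^2" using ne by (metis power2_norm_eq_inner)
  have nw: "norm w = r'" using ww ne by (simp add: norm_eq_sqrt_inner)
  define s where "s t = sqrt (1 + t^2)" for t :: real
  have s1: "s t \<ge> 1" for t unfolding s_def by simp
  have s2: "s t \<le> 1 + \<bar>t\<bar>" for t
  proof -
    have "1 + t^2 \<le> (1+\<bar>t\<bar>)^2" by (simp add: power2_eq_square algebra_simps)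
    then have "sqrt (1 + t^2) \<le> sqrt ((1+\<bar>t\<bar>)^2)" by (rule real_sqrt_le_mono)
    then show ?thesis by (simp add: s_def)
  qed
  define pt where "pt t = c' + (1 / s t) *\<^sub>R (e + t *\<^sub>R w)" for t
  have nrm: "(e + t *\<^sub>R w) \<bullet> (e + t *\<^sub>R w) = r'^2 * (s t)^2" for t
    using ew ww ee by (simp add: s_def algebra_simps inner_commute power2_eq_square)
  have on: "pt t \<in> sphere c' r'" for t
  proof -
    have "norm (e + t *\<^sub>R w) = sqrt (r'^2 * (s t)^2)" by (simp add: norm_eq_sqrt_inner nrm)
    also have "\<dots> = r' * s t" using r' s1[of t] by (simp add: real_sqrt_mult)
    finally have "norm (e + t *\<^sub>R w) = r' * s t" .
    then show ?thesis using s1[of t] r'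
      by (simp add: pt_def dist_norm)
  qed
  have cl: "dist (pt t) z \<le> 2 * \<bar>t\<bar> * r'" for t
  proof -
    have "pt t - z = (1 / s t - 1) *\<^sub>R e + (t / s t) *\<^sub>R w"
      by (simp add: pt_def e_def algebra_simps)
    then have "dist (pt t) z \<le> \<bar>1 / s t - 1\<bar> * r' + \<bar>t / s t\<bar> * r'"
      using norm_triangle_ineq[of "(1 / s t - 1) *\<^sub>R e" "(t / s t) *\<^sub>R w"] ne
      by (simp add: dist_norm nw)
    moreover have "\<bar>1 / s t - 1\<bar> \<le> \<bar>t\<bar>"
    proof -
      have "\<bar>1 / s t - 1\<bar> = (s t - 1) / s t" using s1[of t] by (simp add: field_simps)
      also have "\<dots> \<le> s t - 1" using s1[of t] by (simp add: divide_le_eq mult_le_cancel_left1 )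
      finally show ?thesis using s2[of t] by linarith
    qed
    moreover have "\<bar>t / s t\<bar> \<le> \<bar>t\<bar>" using s1[of t]
      by (simp add: abs_div divide_le_eq mult_le_cancel_left1 )
    ultimately show ?thesis using r'
      mult_right_mono[of "\<bar>1 / s t - 1\<bar>" "\<bar>t\<bar>" r'] mult_right_mono[of "\<bar>t / s t\<bar>" "\<bar>t\<bar>" r']
      by linarith
  qed
  define t where "t = \<epsilon> / (4 * r')"
  have tpos: "t > 0" using ep r' by (simp add: t_def)
  have inb: "pt u \<in> ball z \<epsilon>" if "\<bar>u\<bar> = t" for u
  proof -
    have "dist (pt u) z \<le> 2 * t * r'" using cl[of u] that by simp
    also have "\<dots> = \<epsilon>/2" using r' by (simp add: t_def)
    finally show ?thesis using ep by (simp add: dist_commute)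
  qed
  define d where "d = c' - c"
  have eq: "dist c (pt u) = r" if "\<bar>u\<bar> = t" for u
    using sub on[of u] inb[OF that] by auto
  have z0: "dist c z = r" using sub z ep by auto
  have key: "2 * (d \<bullet> ((1 / s u) *\<^sub>R (e + u *\<^sub>R w))) = r^2 - d \<bullet> d - r'^2" if "\<bar>u\<bar> = t" for u
  proof -
    have "pt u - c = d + (1 / s u) *\<^sub>R (e + u *\<^sub>R w)" by (simp add: pt_def d_def)
    moreover have "(1 / s u) *\<^sub>R (e + u *\<^sub>R w) \<bullet> (1 / s u) *\<^sub>R (e + u *\<^sub>R w) = r'^2"
      using nrm[of u] s1[of u] by (simp add: power2_eq_square)
    moreover have "(pt u - c) \<bullet> (pt u - c) = r^2" using eq[OF that]
      by (simp add: dist_norm power2_norm_eq_inner[symmetric] norm_minus_commute)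
    ultimately show ?thesis by (simp add: algebra_simps inner_commute)
  qed
  have key0: "2 * (d \<bullet> e) = r^2 - d \<bullet> d - r'^2"
  proof -
    have "z - c = d + e" by (simp add: d_def e_def)
    moreover have "(z - c) \<bullet> (z - c) = r^2" using z0
      by (simp add: dist_norm power2_norm_eq_inner[symmetric] norm_minus_commute)
    ultimately show ?thesis using ee by (simp add: algebra_simps inner_commute)
  qed
  have st: "s (-t) = s t" by (simp add: s_def)
  have key0': "2 * (s t * (d \<bullet> e)) = s t * (r^2 - d \<bullet> d - r'^2)"
    using key0 by (metis mult.left_commute)
  have k1: "d \<bullet> e + t * (d \<bullet> w) = s t * (d \<bullet> e)"
  proof -
    have "2 * (d \<bullet> e + t * (d \<bullet> w)) = s t * (r^2 - d \<bullet> d - r'^2)"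
      using key[of t] tpos s1[of t] by (simp add: inner_add_right field_simps)
    then show ?thesis using key0' by (metis mult_cancel_left zero_neq_numeral)
  qed
  have k2: "d \<bullet> e - t * (d \<bullet> w) = s t * (d \<bullet> e)"
  proof -
    have "2 * (d \<bullet> e - t * (d \<bullet> w)) = s t * (r^2 - d \<bullet> d - r'^2)"
      using key[of "-t"] tpos s1[of t] st by (simp add: inner_add_right inner_diff_right field_simps)
    then show ?thesis using key0' by (metis mult_cancel_left zero_neq_numeral)
  qed
  have dw: "d \<bullet> w = 0" using k1 k2 tpos by (smt (verit) mult_eq_0_iff)
  have sgt: "s t > 1" unfolding s_def using tpos by simp
  have de: "d \<bullet> e = 0" using k1 dw sgt
    by (smt (verit, best) mult_cancel_right1 mult_eq_0_iff)
  have enz: "e$1^2 + e$2^2 > 0"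
    using ee r' by (simp add: inner2 power2_eq_square)
  have h1: "d$1*e$1 + d$2*e$2 = 0" using de by (simp add: inner2)
  have h2: "d$2*e$1 - d$1*e$2 = 0" using dw by (simp add: inner2 w1 algebra_simps)
  have "d$1 * (e$1^2 + e$2^2) = e$1 * (d$1*e$1 + d$2*e$2) - e$2*(d$2*e$1 - d$1*e$2)"
       "d$2 * (e$1^2 + e$2^2) = e$2 * (d$1*e$1 + d$2*e$2) + e$1*(d$2*e$1 - d$1*e$2)"
    by (simp_all add: algebra_simps power2_eq_square)
  then have "d$1 * (e$1^2 + e$2^2) = 0" "d$2 * (e$1^2 + e$2^2) = 0"
    using h1 h2 by simp_all
  then have "d$1 = 0" "d$2 = 0" using enz by auto
  then have "d = 0" by (metis (mono_tags) exhaust_2 vec_eq_iff zero_index)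
  then show ?thesis by (simp add: d_def)
qed

lemma sphere_interior_empty:
  fixes c :: "real^2"
  assumes "r > 0"
  shows "interior (sphere c r) = {}"
proof (rule ccontr)
  assume "interior (sphere c r) \<noteq> {}"
  then obtain p e where p: "e > 0" "ball p e \<subseteq> sphere c r"
    by (metis all_not_in_conv mem_interior)
  then have "p \<in> sphere c r" by (meson centre_in_ball subsetD)
  then have "p \<in> closure (ball c r)" using assms by simp
  then obtain y where "y \<in> ball c r" "dist y p < e"
    using p(1) closure_approachable by blast
  then show False using p by (auto simp: dist_commute)
qed

lemma comp_circle:
  fixes X :: "(real^2) set"
  assumes "closed X" "U \<in> components (- X)" "frontier U = sphere c r" "r > 0"
  shows "U = ball c r \<or> U = - cball c r"
proof -
  have oU: "open U" using assms open_components[of "-X" U] by auto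
  have ne: "U \<noteq> {}" using assms(2) in_components_nonempty by blast
  have cU: "connected U" using assms(2) in_components_connected by blast
  have dis: "U \<inter> sphere c r = {}" using frontier_disjoint_eq[of U] oU assms(3) by blast
  show ?thesis
  proof (cases "U \<inter> ball c r = {}")
    case False
    have "U \<subseteq> ball c r"
    proof (rule ccontr)
      assume "\<not> U \<subseteq> ball c r"
      then have "U \<inter> frontier (ball c r) \<noteq> {}"
        using connected_Int_frontier[OF cU False] by blast
      then show False using dis assms(4) by simp
    qed
    moreover have "ball c r \<subseteq> U"
    proof (rule ccontr)
      assume "\<not> ball c r \<subseteq> U"
      then have "ball c r \<inter> frontier U \<noteq> {}"
        using connected_Int_frontier[OF connected_ball, of c r U] False by blast
      then show False using assms(3) by auto
    qed
    ultimately show ?thesis by blast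
  next
    case True
    have sub: "U \<subseteq> - cball c r"
    proof
      fix y assume "y \<in> U"
      then have "\<not> dist c y < r" "dist c y \<noteq> r" using True dis by auto
      then show "y \<in> - cball c r" by simp
    qed
    have cc: "connected (- cball c r)"
      by (rule connected_complement_bounded_convex) auto
    have "- cball c r \<subseteq> U"
    proof (rule ccontr)
      assume "\<not> - cball c r \<subseteq> U"
      moreover have "- cball c r \<inter> U \<noteq> {}" using sub ne by blast
      ultimately have "- cball c r \<inter> frontier U \<noteq> {}"
        using connected_Int_frontier[OF cc] by blast
      then show False using assms(3) by auto
    qed
    then show ?thesis using sub by blast
  qed
qed

lemma local_struct:
  fixes X F :: "(real^2) set"
  assumes clX: "closed X" and intX: "interior X \<noteq> {}" and FX: "F \<subseteq> X"
    and circ: "\<And>V. V \<in> components (- X) \<Longrightarrow> (\<exists>c r. r > 0 \<and> frontier V = sphere c r) \<and> frontier V \<subseteq> F"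
    and U: "U \<in> components (- X)" "frontier U = sphere c r" "r > 0" "x \<in> sphere c r"
    and eta: "\<eta> > 0" "F \<inter> ball x \<eta> \<subseteq> sphere c r"
    and q: "q \<in> cball x (\<eta>/2)" "q \<notin> U"
  shows "q \<in> X"
proof (rule ccontr)
  assume qX: "q \<notin> X"
  define V where "V = connected_component_set (- X) q"
  have V: "V \<in> components (- X)" using qX by (auto simp: V_def components_iff)
  have qV: "q \<in> V" using qX by (simp add: V_def)
  have VX: "V \<subseteq> - X" by (simp add: V_def connected_component_subset)
  obtain c' r' where c': "r' > 0" "frontier V = sphere c' r'" and fVF: "frontier V \<subseteq> F"
    using circ[OF V] by blast
  have xX: "x \<in> X" using circ[OF U(1)] U FX by blast
  have "closed_segment q x \<inter> frontier V \<noteq> {}"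
    by (rule connected_Int_frontier) (use qV xX VX in auto)
  then obtain z where z: "z \<in> closed_segment q x" "z \<in> frontier V" by blast
  have "dist z x \<le> dist q x" using segment_bound(2)[OF z(1)] by (simp add: dist_norm norm_minus_commute)
  also have "\<dots> \<le> \<eta>/2" using q(1) by (simp add: dist_commute)
  finally have zx: "dist z x \<le> \<eta>/2" .
  have sub: "sphere c' r' \<inter> ball z (\<eta>/2) \<subseteq> sphere c r"
  proof
    fix w assume w: "w \<in> sphere c' r' \<inter> ball z (\<eta>/2)"
    then have "w \<in> F" using fVF c' by auto
    moreover have "dist x w < \<eta>" using w zx dist_triangle[of x w z] by (simp add: dist_commute)
    ultimately show "w \<in> sphere c r" using eta by auto
  qed
  have zs: "z \<in> sphere c' r'" using z c' by simp
  have cc: "c = c'" by (rule circle_rigid[OF c'(1) _ zs sub]) (use eta in simp)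
  have "z \<in> sphere c r" using sub zs eta by auto
  then have rr: "r = r'" using zs cc by simp
  have fV: "frontier V = sphere c r" using c' cc rr by simp
  have "V \<noteq> U" using qV q(2) by blast
  then have "(U = ball c r \<and> V = - cball c r) \<or> (V = ball c r \<and> U = - cball c r)"
    using comp_circle[OF clX U(1,2,3)] comp_circle[OF clX V fV U(3)] by auto
  moreover have "U \<subseteq> - X" using U(1) by (meson Compl_iff in_components_subset subsetD subsetI)
  ultimately have "ball c r \<subseteq> - X" "- cball c r \<subseteq> - X" using VX by auto
  then have "X \<subseteq> sphere c r"
  proof (intro subsetI)
    fix y assume "y \<in> X"
    with \<open>ball c r \<subseteq> - X\<close> \<open>- cball c r \<subseteq> - X\<close> have "\<not> dist c y < r" "\<not> dist c y > r" by auto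
    then show "y \<in> sphere c r" by simp
  qed
  then have "interior X \<subseteq> interior (sphere c r)" by (rule interior_mono)
  then show False using sphere_interior_empty[OF U(3)] intX by blast
qed

lemma local_retract_gen:
  fixes X U :: "(real^2) set" and x c :: "real^2"
  assumes r: "r > 0" and x: "x \<in> sphere c r"
    and eta: "\<eta> > 0" "\<And>q. q \<in> cball x \<eta> \<Longrightarrow> q \<notin> U \<Longrightarrow> q \<in> X" "U \<inter> X = {}"
    and ep: "\<epsilon> > 0"
    and phc: "continuous_on UNIV \<phi>"
    and phb: "\<And>n. \<bar>\<phi> n - n\<bar> \<le> \<bar>n - r\<bar>"
    and phU: "\<And>q. q \<noteq> c \<Longrightarrow> c + (\<phi> (norm (q - c)) / norm (q - c)) *\<^sub>R (q - c) \<notin> U"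
    and phid: "\<And>q. q \<notin> U \<Longrightarrow> \<phi> (norm (q - c)) = norm (q - c)"
  obtains \<delta> R where "\<delta> > 0" "\<delta> \<le> \<epsilon>" "continuous_on (cball x \<delta>) R"
     "R ` cball x \<delta> \<subseteq> X \<inter> cball x \<epsilon>" "\<And>q. q \<in> X \<inter> cball x \<delta> \<Longrightarrow> R q = q"
proof -
  define \<delta> where "\<delta> = min (min \<eta> \<epsilon>) r / 2"
  have dp: "\<delta> > 0" using eta ep r by (simp add: \<delta>_def)
  define R where "R q = c + (\<phi> (norm (q - c)) / norm (q - c)) *\<^sub>R (q - c)" for q
  have xc: "norm (x - c) = r" using x by (simp add: dist_norm norm_minus_commute)
  have nz: "q - c \<noteq> 0" if "q \<in> cball x \<delta>" for q
  proof
    assume "q - c = 0"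
    then have "q = c" by simp
    then have "dist x c \<le> \<delta>" using that by simp
    moreover have "dist x c = r" using xc by (simp add: dist_norm)
    ultimately show False using r by (simp add: \<delta>_def)
  qed
  have cont: "continuous_on (cball x \<delta>) R"
    unfolding R_def
    by (intro continuous_intros continuous_on_compose2[OF phc]) (use nz in auto)
  have Rq: "norm (R q - q) \<le> dist q x" if "q \<in> cball x \<delta>" for q
  proof -
    have n0: "norm (q - c) > 0" using nz[OF that] by simp
    have "R q - q = (\<phi> (norm (q - c)) / norm (q - c) - 1) *\<^sub>R (q - c)"
      by (simp add: R_def algebra_simps)
    then have "norm (R q - q) = \<bar>\<phi> (norm (q - c)) / norm (q - c) - 1\<bar> * norm (q - c)" by simp
    also have "\<dots> = \<bar>\<phi> (norm (q - c)) - norm (q - c)\<bar>"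
      using n0 by (simp add: abs_mult_pos' field_simps flip: abs_mult)
    also have "\<dots> \<le> \<bar>norm (q - c) - r\<bar>" by (rule phb)
    also have "\<dots> = \<bar>norm (q - c) - norm (x - c)\<bar>" using xc by simp
    also have "\<dots> \<le> norm ((q - c) - (x - c))" by (rule norm_triangle_ineq3)
    also have "\<dots> = dist q x" by (simp add: dist_norm)
    finally show ?thesis .
  qed
  have img: "R ` cball x \<delta> \<subseteq> X \<inter> cball x \<epsilon>"
  proof
    fix p assume "p \<in> R ` cball x \<delta>"
    then obtain q where q: "q \<in> cball x \<delta>" "p = R q" by blast
    have "dist x p \<le> dist x q + norm (R q - q)"
      using q(2) dist_triangle[of x p q] by (simp add: dist_norm norm_minus_commute)
    also have "\<dots> \<le> 2 * \<delta>" using Rq[OF q(1)] q(1) by (simp add: dist_commute)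
    finally have dxp: "dist x p \<le> 2 * \<delta>" .
    have "p \<notin> U" using phU nz[OF q(1)] q(2) by (simp add: R_def)
    moreover have "p \<in> cball x \<eta>" using dxp by (simp add: \<delta>_def)
    ultimately have "p \<in> X" using eta by blast
    moreover have "p \<in> cball x \<epsilon>" using dxp by (simp add: \<delta>_def)
    ultimately show "p \<in> X \<inter> cball x \<epsilon>" by blast
  qed
  have fixR: "R q = q" if "q \<in> X \<inter> cball x \<delta>" for q
  proof -
    have "q \<notin> U" using that eta(3) by blast
    then have "\<phi> (norm (q - c)) = norm (q - c)" by (rule phid)
    moreover have "norm (q - c) \<noteq> 0" using nz that by auto
    ultimately show ?thesis by (simp add: R_def)
  qed
  show ?thesis
    by (rule that[OF dp _ cont img fixR]) (use ep in \<open>simp add: \<delta>_def\<close>)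
qed

lemma local_retract:
  fixes X U :: "(real^2) set" and x c :: "real^2"
  assumes U: "U = ball c r \<or> U = - cball c r" and r: "r > 0" and x: "x \<in> sphere c r"
    and eta: "\<eta> > 0" "\<And>q. q \<in> cball x \<eta> \<Longrightarrow> q \<notin> U \<Longrightarrow> q \<in> X" "U \<inter> X = {}"
    and ep: "\<epsilon> > 0"
  obtains \<delta> R where "\<delta> > 0" "\<delta> \<le> \<epsilon>" "continuous_on (cball x \<delta>) R"
     "R ` cball x \<delta> \<subseteq> X \<inter> cball x \<epsilon>" "\<And>q. q \<in> X \<inter> cball x \<delta> \<Longrightarrow> R q = q"
  using U
proof
  assume U1: "U = ball c r"
  show ?thesis
  proof (rule local_retract_gen[OF r x eta ep, of "\<lambda>n. max n r"])
    show "continuous_on UNIV (\<lambda>n. max n r)" by (intro continuous_intros)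
    show "\<bar>max n r - n\<bar> \<le> \<bar>n - r\<bar>" for n by linarith
    show "c + (max (norm (q - c)) r / norm (q - c)) *\<^sub>R (q - c) \<notin> U" if "q \<noteq> c" for q
    proof -
      have n0: "norm (q - c) > 0" using that by simp
      have "norm ((max (norm (q - c)) r / norm (q - c)) *\<^sub>R (q - c)) = max (norm (q - c)) r"
        using n0 r by simp
      then show ?thesis using U1 by (simp add: dist_norm)
    qed
    show "max (norm (q - c)) r = norm (q - c)" if "q \<notin> U" for q
      using that U1 by (simp add: dist_norm norm_minus_commute)
  qed (use that in auto)
next
  assume U1: "U = - cball c r"
  show ?thesis
  proof (rule local_retract_gen[OF r x eta ep, of "\<lambda>n. min n r"])
    show "continuous_on UNIV (\<lambda>n. min n r)" by (intro continuous_intros)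
    show "\<bar>min n r - n\<bar> \<le> \<bar>n - r\<bar>" for n by linarith
    show "c + (min (norm (q - c)) r / norm (q - c)) *\<^sub>R (q - c) \<notin> U" if "q \<noteq> c" for q
    proof -
      have n0: "norm (q - c) > 0" using that by simp
      have "norm ((min (norm (q - c)) r / norm (q - c)) *\<^sub>R (q - c)) = min (norm (q - c)) r"
        using n0 r by simp
      then show ?thesis using U1 by (simp add: dist_norm)
    qed
    show "min (norm (q - c)) r = norm (q - c)" if "q \<notin> U" for q
      using that U1 by (simp add: dist_norm norm_minus_commute)
  qed (use that in auto)
qed



lemma local_homotopy:
  fixes X K :: "(real^2) set" and f :: "real^2 \<Rightarrow> 'b::metric_space" and \<gamma> :: "real \<Rightarrow> 'b"
  assumes fc: "continuous_on X f" and x0: "x0 \<in> X" and dp: "\<delta> > 0"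
    and Rc: "continuous_on (cball x0 \<delta>) R" and Ri: "R ` cball x0 \<delta> \<subseteq> X \<inter> K"
    and Rf: "\<And>q. q \<in> X \<inter> cball x0 \<delta> \<Longrightarrow> R q = q"
    and gp: "path \<gamma>" "pathstart \<gamma> = f x0" "pathfinish \<gamma> = y"
  obtains H :: "real \<times> (real^2) \<Rightarrow> 'b" where "continuous_on ({0..1} \<times> X) H"
    "\<And>p. p \<in> X \<Longrightarrow> H (0,p) = f p"
    "\<And>t p. t \<in> {0..1} \<Longrightarrow> p \<in> X \<Longrightarrow> p \<notin> ball x0 \<delta> \<Longrightarrow> H (t,p) = f p"
    "H (1, x0) = y"
    "\<And>t p. t \<in> {0..1} \<Longrightarrow> p \<in> X \<Longrightarrow>
        H (t,p) = f p \<or> (p \<in> cball x0 \<delta> \<and> (H (t,p) \<in> f ` (X \<inter> K) \<or> H (t,p) \<in> path_image \<gamma>))"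
proof -
  define lam where "lam p = min 1 (max 0 (2 - 2 * dist p x0 / \<delta>))" for p
  define qq where "qq z = x0 + (1 - min 1 (2 * fst z) * lam (snd z)) *\<^sub>R (snd z - x0)" for z :: "real \<times> (real^2)"
  define rho where "rho z = (if dist (snd z) x0 \<le> \<delta> then R (qq z) else snd z)" for z :: "real \<times> (real^2)"
  define mu where "mu p = max 0 (1 - 2 * dist p x0 / \<delta>)" for p
  define kap where "kap z = min (fst z - 1/2) (\<delta>/2 - dist (snd z) x0)" for z :: "real \<times> (real^2)"
  define H where "H z = (if kap z \<le> 0 then f (rho z) else \<gamma> ((2 * fst z - 1) * mu (snd z)))" for z
  define S where "S = {0..1::real} \<times> X"
  have lam01: "0 \<le> lam p" "lam p \<le> 1" for p by (auto simp: lam_def)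
  have qqc: "continuous_on S qq" unfolding qq_def lam_def by (intro continuous_intros) (use dp in auto)
  have qqin: "qq z \<in> cball x0 \<delta>" if "z \<in> S" "dist (snd z) x0 \<le> \<delta>" for z
  proof -
    have a: "0 \<le> min 1 (2 * fst z) * lam (snd z)" "min 1 (2 * fst z) * lam (snd z) \<le> 1"
      using that(1) lam01[of "snd z"] by (auto simp: S_def intro: mult_le_one)
    have "dist x0 (qq z) = \<bar>1 - min 1 (2 * fst z) * lam (snd z)\<bar> * dist (snd z) x0"
      by (simp add: qq_def dist_norm)
    also have "\<dots> \<le> 1 * \<delta>" using a that(2) by (intro mult_mono) auto
    finally show ?thesis by simp
  qed
  have rhoX: "rho z \<in> X" if "z \<in> S" for z
    using qqin[OF that] Ri that by (auto simp: rho_def S_def)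
  have rhoc: "continuous_on S rho"
    unfolding rho_def
  proof (rule continuous_on_cases_le)
    show "continuous_on {z \<in> S. dist (snd z) x0 \<le> \<delta>} (\<lambda>z. R (qq z))"
      by (rule continuous_on_compose2[OF Rc continuous_on_subset[OF qqc]]) (use qqin in auto)
    show "continuous_on {z \<in> S. \<delta> \<le> dist (snd z) x0} snd" by (intro continuous_intros)
    show "continuous_on S (\<lambda>z. dist (snd z) x0)" by (intro continuous_intros)
    show "R (qq z) = snd z" if "z \<in> S" "dist (snd z) x0 = \<delta>" for z
    proof -
      have "lam (snd z) = 0" using that dp by (simp add: lam_def)
      then have "qq z = snd z" by (simp add: qq_def)
      then show ?thesis using that Rf by (auto simp: S_def dist_commute)
    qed
  qed
  have Hc: "continuous_on S H"
    unfolding H_def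
  proof (rule continuous_on_cases_le)
    show "continuous_on {z \<in> S. kap z \<le> 0} (\<lambda>z. f (rho z))"
      by (rule continuous_on_compose2[OF fc continuous_on_subset[OF rhoc]]) (use rhoX in auto)
    have g: "continuous_on {0..1} \<gamma>" using gp(1) by (simp add: path_def)
    show "continuous_on {z \<in> S. 0 \<le> kap z} (\<lambda>z. \<gamma> ((2 * fst z - 1) * mu (snd z)))"
    proof (rule continuous_on_compose2[OF g])
      show "continuous_on {z \<in> S. 0 \<le> kap z} (\<lambda>z. (2 * fst z - 1) * mu (snd z))"
        unfolding mu_def by (intro continuous_intros) (use dp in auto)
      show "(\<lambda>z. (2 * fst z - 1) * mu (snd z)) ` {z \<in> S. 0 \<le> kap z} \<subseteq> {0..1}"
      proof clarify
        fix t p assume "(t,p) \<in> S" "0 \<le> kap (t,p)"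
        then have "1/2 \<le> t" "t \<le> 1" by (auto simp: kap_def S_def)
        moreover have "0 \<le> mu p" "mu p \<le> 1" using dp by (auto simp: mu_def)
        ultimately show "(2 * fst (t,p) - 1) * mu (snd (t,p)) \<in> {0..1}"
          by (auto intro: mult_le_one)
      qed
    qed
    show "continuous_on S kap" unfolding kap_def by (intro continuous_intros)
    show "f (rho z) = \<gamma> ((2 * fst z - 1) * mu (snd z))" if "z \<in> S" "kap z = 0" for z
    proof -
      obtain t p where z: "z = (t,p)" by fastforce
      have tp: "1/2 \<le> t" "dist p x0 \<le> \<delta>/2" "t = 1/2 \<or> dist p x0 = \<delta>/2"
        using that(2) by (auto simp: kap_def z min_def split: if_splits)
      have "lam p = 1" using tp dp by (simp add: lam_def field_simps)
      then have "qq z = x0" using tp by (simp add: qq_def z)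
      then have "rho z = x0" using tp dp Rf x0 by (simp add: rho_def z)
      moreover have "(2 * fst z - 1) * mu (snd z) = 0"
        using tp dp by (auto simp: z mu_def)
      ultimately show ?thesis using gp(2) by (metis pathstart_def)
    qed
  qed
  show ?thesis
  proof (rule that[of H])
    show "continuous_on ({0..1} \<times> X) H" using Hc by (simp add: S_def)
    show "H (0,p) = f p" if "p \<in> X" for p
    proof -
      have "kap (0,p) \<le> 0" by (simp add: kap_def)
      moreover have "rho (0,p) = p" using Rf that by (simp add: rho_def qq_def dist_commute)
      ultimately show ?thesis by (simp add: H_def)
    qed
    show "H (t,p) = f p" if "t \<in> {0..1}" "p \<in> X" "p \<notin> ball x0 \<delta>" for t p
    proof -
      have d: "dist p x0 \<ge> \<delta>" using that(3) by (simp add: dist_commute)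
      then have "kap (t,p) \<le> 0" using dp by (simp add: kap_def)
      moreover have "rho (t,p) = p"
      proof (cases "dist p x0 \<le> \<delta>")
        case True
        then have "dist p x0 = \<delta>" using d by simp
        then have "lam p = 0" using dp by (simp add: lam_def)
        then show ?thesis using True Rf that by (simp add: rho_def qq_def dist_commute)
      qed (simp add: rho_def)
      ultimately show ?thesis by (simp add: H_def)
    qed
    show "H (1, x0) = y"
    proof -
      have "kap (1,x0) > 0" using dp by (simp add: kap_def)
      moreover have "mu x0 = 1" by (simp add: mu_def)
      ultimately show ?thesis using gp(3) by (simp add: H_def pathfinish_def)
    qed
    show "H (t,p) = f p \<or> (p \<in> cball x0 \<delta> \<and> (H (t,p) \<in> f ` (X \<inter> K) \<or> H (t,p) \<in> path_image \<gamma>))"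
      if "t \<in> {0..1}" "p \<in> X" for t p
    proof (cases "kap (t,p) \<le> 0")
      case True
      show ?thesis
      proof (cases "dist p x0 \<le> \<delta>")
        case True2: True
        have "R (qq (t,p)) \<in> X \<inter> K" using Ri qqin[of "(t,p)"] True2 that by (auto simp: S_def)
        then show ?thesis using True True2 by (simp add: H_def rho_def dist_commute)
      next
        case False
        then show ?thesis using True by (simp add: H_def rho_def)
      qed
    next
      case False
      then have "1/2 < t" "dist p x0 < \<delta>/2" by (auto simp: kap_def)
      moreover have "0 \<le> mu p" "mu p \<le> 1" using dp by (auto simp: mu_def)
      ultimately have "(2 * t - 1) * mu p \<in> {0..1}" using that(1) by (auto intro: mult_le_one)
      then have "H (t,p) \<in> path_image \<gamma>" using False by (simp add: H_def path_image_def)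
      moreover have "p \<in> cball x0 \<delta>" using \<open>dist p x0 < \<delta>/2\<close> dp by (simp add: dist_commute)
      ultimately show ?thesis by blast
    qed
  qed
qed



lemma paste_homotopies:
  fixes f :: "'a::metric_space \<Rightarrow> 'b::metric_space" and H :: "nat \<Rightarrow> real \<times> 'a \<Rightarrow> 'b"
  assumes fc: "continuous_on X f"
    and Hc: "\<And>n. continuous_on ({0..1} \<times> X) (H n)"
    and So: "\<And>n. open (S n)"
    and Sd: "\<And>m n. m \<noteq> n \<Longrightarrow> S m \<inter> S n = {}"
    and Hout: "\<And>n t p. t \<in> {0..1} \<Longrightarrow> p \<in> X \<Longrightarrow> p \<notin> S n \<Longrightarrow> H n (t,p) = f p"
    and Hb: "\<And>n t p. t \<in> {0..1} \<Longrightarrow> p \<in> X \<Longrightarrow> dist (H n (t,p)) (f p) \<le> \<omega> n"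
    and om: "\<omega> \<longlonglongrightarrow> 0"
  shows "continuous_on ({0..1} \<times> X)
           (\<lambda>z. if \<exists>n. snd z \<in> S n then H (SOME n. snd z \<in> S n) z else f (snd z))"
    (is "continuous_on ?D ?K")
proof -
  have some: "(SOME n. p \<in> S n) = n" if "p \<in> S n" for p n
    using Sd that by (metis (mono_tags, lifting) disjoint_iff someI)
  have Kin: "?K z = H n z" if "snd z \<in> S n" for z n using some[OF that] that by auto
  have Kout: "?K z = f (snd z)" if "\<And>n. snd z \<notin> S n" for z using that by auto
  show ?thesis
  unfolding continuous_on_iff
  proof (intro ballI allI impI)
    fix z0 and e :: real assume z0: "z0 \<in> ?D" and e: "e > 0"
    obtain t0 p0 where z0e: "z0 = (t0,p0)" by fastforce
    show "\<exists>d>0. \<forall>z'\<in>?D. dist z' z0 < d \<longrightarrow> dist (?K z') (?K z0) < e"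
    proof (cases "\<exists>m. p0 \<in> S m")
      case True
      then obtain m where m: "p0 \<in> S m" by blast
      obtain d1 where d1: "d1 > 0" "ball p0 d1 \<subseteq> S m" using So[of m] m open_contains_ball by blast
      obtain d2 where d2: "d2 > 0" "\<forall>z'\<in>?D. dist z' z0 < d2 \<longrightarrow> dist (H m z') (H m z0) < e"
        using Hc[of m] z0 e unfolding continuous_on_iff by blast
      show ?thesis
      proof (intro exI[of _ "min d1 d2"] conjI ballI impI)
        show "min d1 d2 > 0" using d1 d2 by simp
        fix z' assume z': "z' \<in> ?D" "dist z' z0 < min d1 d2"
        have "dist (snd z') p0 < d1" using dist_snd_le[of z' z0] z' z0e by simp
        then have "snd z' \<in> S m" using d1 by (auto simp: dist_commute)
        then show "dist (?K z') (?K z0) < e" using Kin[of z' m] Kin[of z0 m] m z0e d2 z' by auto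
      qed
    next
      case False
      then have K0: "?K z0 = f p0" using z0e by auto
      have p0X: "p0 \<in> X" "t0 \<in> {0..1}" using z0 z0e by auto
      obtain N where N: "\<And>n. n \<ge> N \<Longrightarrow> \<omega> n < e/2"
        using om e unfolding LIMSEQ_def by (metis dist_real_def diff_zero abs_less_iff half_gt_zero)
      obtain df where df: "df > 0" "\<forall>p\<in>X. dist p p0 < df \<longrightarrow> dist (f p) (f p0) < e/2"
        using fc p0X unfolding continuous_on_iff by (meson e half_gt_zero)
      have "\<forall>n\<in>{..<N}. \<exists>d. d > 0 \<and> (\<forall>z'\<in>?D. dist z' z0 < d \<longrightarrow> dist (H n z') (H n z0) < e)"
        using Hc z0 e unfolding continuous_on_iff by blast
      then obtain dd where dd: "\<And>n. n < N \<Longrightarrow> dd n > 0 \<and> (\<forall>z'\<in>?D. dist z' z0 < dd n \<longrightarrow> dist (H n z') (H n z0) < e)"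
        by (metis lessThan_iff)
      define d where "d = Min (insert df (dd ` {..<N}))"
      have dpos: "d > 0" using df dd by (auto simp: d_def)
      have ddf: "d \<le> df" by (simp add: d_def)
      have ddn: "d \<le> dd n" if "n < N" for n using that by (simp add: d_def)
      show ?thesis
      proof (intro exI[of _ d] conjI ballI impI)
        show "d > 0" by (rule dpos)
        fix z' assume z': "z' \<in> ?D" "dist z' z0 < d"
        obtain t p where z'e: "z' = (t,p)" by fastforce
        have pX: "p \<in> X" "t \<in> {0..1}" using z' z'e by auto
        have dp: "dist p p0 < df" using dist_snd_le[of z' z0] z' z0e z'e ddf by simp
        have fp: "dist (f p) (f p0) < e/2" using df dp pX by blast
        show "dist (?K z') (?K z0) < e"
        proof (cases "\<exists>k. p \<in> S k")
          case True
          then obtain k where k: "p \<in> S k" by blast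
          have Kz: "?K z' = H k z'" using Kin[of z' k] k z'e by simp
          show ?thesis
          proof (cases "k < N")
            case True
            have "H k z0 = f p0" using Hout[of t0 p0 k] p0X False z0e by auto
            then show ?thesis using dd[OF True] z' ddn[OF True] Kz K0 by auto
          next
            case False
            have "dist (H k z') (f p0) \<le> dist (H k z') (f p) + dist (f p) (f p0)" by (rule dist_triangle)
            also have "\<dots> < e" using Hb[OF pX(2) pX(1), of k] N[of k] False fp z'e by simp
            finally show ?thesis using Kz K0 by simp
          qed
        next
          case False
          then have "?K z' = f p" using Kout[of z'] z'e by auto
          then show ?thesis using K0 fp e by simp
        qed
      qed
    qed
  qed
qed



lemma uniform_paths:
  fixes f :: "'a::metric_space \<Rightarrow> 'b::metric_space"
  assumes cX: "compact X" and lX: "locally path_connected X" and fc: "continuous_on X f" and e: "e > 0"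
  obtains d where "d > 0" "\<And>u v. u \<in> f ` X \<Longrightarrow> v \<in> f ` X \<Longrightarrow> dist u v < d \<Longrightarrow>
       \<exists>\<gamma>. path \<gamma> \<and> pathstart \<gamma> = u \<and> pathfinish \<gamma> = v \<and> path_image \<gamma> \<subseteq> ball u e"
proof -
  define L where "L = f ` X"
  have lL: "locally path_connected L"
    unfolding L_def
    by (rule locally_path_connected_quotient_image[OF lX])
       (rule Abstract_Topology_2.continuous_imp_quotient_map[OF fc refl cX], assumption)
  define G where "G = {T. open T \<and> (\<exists>w\<in>L. \<exists>V. path_connected V \<and> L \<inter> T \<subseteq> V \<and> V \<subseteq> ball w (e/2))}"
  have cov: "L \<subseteq> \<Union>G"
  proof
    fix w assume w: "w \<in> L"
    have op: "openin (top_of_set L) (L \<inter> ball w (e/2))" by (simp add: openin_open_Int)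
    have wi: "w \<in> L \<inter> ball w (e/2)" using w e by simp
    obtain U V where UV: "openin (top_of_set L) U" "path_connected V" "w \<in> U" "U \<subseteq> V" "V \<subseteq> L \<inter> ball w (e/2)"
      using lL[unfolded locally_def, rule_format, OF conjI[OF op wi]] by blast
    obtain T where T: "open T" "U = L \<inter> T" using UV(1) by (auto simp: openin_open)
    have "T \<in> G" unfolding G_def using T UV w by blast
    then show "w \<in> \<Union>G" using T UV by blast
  qed
  have cL: "compact L" unfolding L_def by (rule compact_continuous_image[OF fc cX])
  have opG: "\<And>T. T \<in> G \<Longrightarrow> open T" by (simp add: G_def)
  obtain d where d: "d > 0" "\<And>x. x \<in> L \<Longrightarrow> \<exists>T\<in>G. ball x d \<subseteq> T"
    using Heine_Borel_lemma[OF cL cov opG] by blast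
  show ?thesis
  proof (rule that[OF d(1)])
    fix u v assume u: "u \<in> f ` X" and v: "v \<in> f ` X" and uv: "dist u v < d"
    obtain T where T: "T \<in> G" "ball u d \<subseteq> T" using d(2) u by (auto simp: L_def)
    obtain w V where wV: "w \<in> L" "path_connected V" "L \<inter> T \<subseteq> V" "V \<subseteq> ball w (e/2)"
      using T(1) by (auto simp: G_def)
    have "u \<in> ball u d" using d(1) by simp
    then have uV: "u \<in> V" using T(2) u wV(3) unfolding L_def by blast
    have "v \<in> ball u d" using uv by simp
    then have vV: "v \<in> V" using T(2) v wV(3) unfolding L_def by blast
    obtain \<gamma> where g: "path \<gamma>" "path_image \<gamma> \<subseteq> V" "pathstart \<gamma> = u" "pathfinish \<gamma> = v"
      using wV(2) uV vV unfolding path_connected_def by blast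
    have "V \<subseteq> ball u e"
    proof
      fix p assume "p \<in> V"
      then have "dist w p < e/2" "dist w u < e/2" using wV(4) uV by auto
      then show "p \<in> ball u e" using dist_triangle[of u p w] by (simp add: dist_commute)
    qed
    then show "\<exists>\<gamma>. path \<gamma> \<and> pathstart \<gamma> = u \<and> pathfinish \<gamma> = v \<and> path_image \<gamma> \<subseteq> ball u e"
      using g by blast
  qed
qed


lemma uniform_paths':
  fixes f :: "'a::metric_space \<Rightarrow> 'b::metric_space"
  assumes "compact X" "locally path_connected X" "continuous_on X f" "e > 0"
  shows "\<exists>d>0. \<forall>u\<in>f ` X. \<forall>v\<in>f ` X. dist u v < d \<longrightarrow>
       (\<exists>\<gamma>. path \<gamma> \<and> pathstart \<gamma> = u \<and> pathfinish \<gamma> = v \<and> path_image \<gamma> \<subseteq> ball u e)"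
proof (rule uniform_paths[OF assms])
  fix d assume d: "d > 0" "\<And>u v. u \<in> f ` X \<Longrightarrow> v \<in> f ` X \<Longrightarrow> dist u v < d \<Longrightarrow>
       \<exists>\<gamma>. path \<gamma> \<and> pathstart \<gamma> = u \<and> pathfinish \<gamma> = v \<and> path_image \<gamma> \<subseteq> ball u e"
  show ?thesis using d by blast
qed

theorem mainTheorem15:
  fixes X :: "(real^2) set" and f :: "real^2 \<Rightarrow> 'b::metric_space"
    and x :: "nat \<Rightarrow> real^2" and y :: "nat \<Rightarrow> 'b"
  assumes "standard_peano_continuum X"
    and "continuous_on X f"
    and "inj x"
    and "\<And>n. x n \<in> X"
    and "\<And>n. \<exists>C \<in> isolated_boundary_circles X. x n \<in> C"
    and "\<And>C. C \<in> isolated_boundary_circles X \<Longrightarrow> finite {n. x n \<in> C}"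
    and "\<And>n. y n \<in> f ` X"
    and "(\<lambda>n. dist (f (x n)) (y n)) \<longlonglongrightarrow> 0"
  shows "\<exists>g. continuous_on X g \<and> homotopic_with_canon (\<lambda>_. True) X UNIV f g \<and>
             (\<forall>n. g (x n) = y n)"
proof -
  note std = assms(1)[unfolded standard_peano_continuum_def two_dim_peano_continuum_def peano_continuum_def]
  have cX: "compact X" and lX: "locally path_connected X" and conX: "connected X"
    and intX: "interior X \<noteq> {}" using std by auto
  have compC: "round_circle (frontier U) \<and> openin (top_of_set (Fr X)) (frontier U)"
    if "U \<in> components (- X)" for U using std that by blast
  have clX: "closed X" using cX compact_imp_closed by blast
  define F where "F = Fr X"
  have FX: "F \<subseteq> X" by (auto simp: F_def Fr_def)
  have circ: "(\<exists>c r. r > 0 \<and> frontier V = sphere c r) \<and> frontier V \<subseteq> F"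
    if "V \<in> components (- X)" for V
  proof -
    have rc: "round_circle (frontier V)" and op: "openin (top_of_set (Fr X)) (frontier V)"
      using compC[OF that] by auto
    have "frontier V \<subseteq> Fr X" using openin_imp_subset[OF op] .
    moreover have "\<exists>c r. r > 0 \<and> frontier V = sphere c r" using rc by (simp add: round_circle_def)
    ultimately show ?thesis by (simp add: F_def)
  qed
  have ex1: "\<exists>U c r. U \<in> components (- X) \<and> frontier U = sphere c r \<and> r > 0 \<and> x n \<in> sphere c r" for n
  proof -
    obtain C where C: "C \<in> isolated_boundary_circles X" "x n \<in> C" using assms(5) by blast
    then obtain U where U: "U \<in> components (- X)" "C = frontier U"
      by (auto simp: isolated_boundary_circles_def)
    then obtain c r where "r > 0" "frontier U = sphere c r" using circ by blast
    then show ?thesis using U C by blast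
  qed
  obtain Uf cf rf where Ufr: "\<And>n. Uf n \<in> components (- X)" "\<And>n. frontier (Uf n) = sphere (cf n) (rf n)"
    "\<And>n. rf n > 0" "\<And>n. x n \<in> sphere (cf n) (rf n)"
    using ex1 by metis
  have xF: "x n \<in> F" for n using circ[OF Ufr(1)[of n]] Ufr(2,4)[of n] by blast
  have ex2: "\<exists>\<eta>. \<eta> > 0 \<and> F \<inter> ball (x n) \<eta> \<subseteq> sphere (cf n) (rf n)" for n
  proof -
    have "openin (top_of_set F) (sphere (cf n) (rf n))"
      using compC[OF Ufr(1)[of n]] Ufr(2)[of n] by (simp add: F_def)
    then obtain e where "e > 0" "ball (x n) e \<inter> F \<subseteq> sphere (cf n) (rf n)"
      using Ufr(4)[of n] unfolding openin_contains_ball by blast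
    then show ?thesis by blast
  qed
  obtain \<eta> where eta: "\<And>n. \<eta> n > 0" "\<And>n. F \<inter> ball (x n) (\<eta> n) \<subseteq> sphere (cf n) (rf n)"
    using ex2 by metis
  have UX: "Uf n \<inter> X = {}" for n using in_components_subset[OF Ufr(1)[of n]] by blast
  have Uform: "Uf n = ball (cf n) (rf n) \<or> Uf n = - cball (cf n) (rf n)" for n
    using comp_circle[OF clX Ufr(1) Ufr(2) Ufr(3)] .
  have loc: "q \<in> X" if "q \<in> cball (x n) (\<eta> n / 2)" "q \<notin> Uf n" for n q
    by (rule local_struct[OF clX intX FX circ Ufr(1,2,3,4) eta(1) eta(2) that])
  have ex3: "\<exists>\<rho>>0. \<forall>m. m \<noteq> n \<longrightarrow> \<rho> \<le> dist (x m) (x n)" for n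
  proof -
    define M where "M = {m. x m \<in> sphere (cf n) (rf n)}"
    have "sphere (cf n) (rf n) \<in> isolated_boundary_circles X"
      using Ufr(1,2)[of n] unfolding isolated_boundary_circles_def by force
    then have fM: "finite M" unfolding M_def by (rule assms(6))
    define \<rho> where "\<rho> = Min (insert (\<eta> n) ((\<lambda>m. dist (x m) (x n)) ` (M - {n})))"
    have pos: "dist (x m) (x n) > 0" if "m \<noteq> n" for m
      using assms(3) that by (simp add: inj_eq)
    have rp: "\<rho> > 0" unfolding \<rho>_def using fM eta(1)[of n] pos by (auto simp: Min_gr_iff)
    have "\<rho> \<le> dist (x m) (x n)" if "m \<noteq> n" for m
    proof (cases "m \<in> M")
      case True
      then show ?thesis unfolding \<rho>_def using fM that by (intro Min_le) auto
    next
      case False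
      have "\<not> dist (x m) (x n) < \<eta> n"
      proof
        assume "dist (x m) (x n) < \<eta> n"
        then have "x m \<in> F \<inter> ball (x n) (\<eta> n)" using xF by (simp add: dist_commute)
        then show False using eta(2)[of n] False by (auto simp: M_def)
      qed
      moreover have "\<rho> \<le> \<eta> n" unfolding \<rho>_def using fM by (intro Min_le) auto
      ultimately show ?thesis by linarith
    qed
    then show ?thesis using rp by blast
  qed
  obtain \<rho> where rho: "\<And>n. \<rho> n > 0" "\<And>m n. m \<noteq> n \<Longrightarrow> \<rho> n \<le> dist (x m) (x n)"
    using ex3 by metis
  have uc: "uniformly_continuous_on X f" using compact_uniformly_continuous assms(2) cX by blast
  have ex4: "\<exists>d>0. \<forall>p\<in>X. \<forall>p'\<in>X. dist p' p < d \<longrightarrow> dist (f p') (f p) < inverse (real (Suc n))" for n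
    using uc unfolding uniformly_continuous_on_def by simp
  obtain ud where ud: "\<And>n. ud n > 0"
    "\<And>n p p'. p \<in> X \<Longrightarrow> p' \<in> X \<Longrightarrow> dist p' p < ud n \<Longrightarrow> dist (f p') (f p) < inverse (real (Suc n))"
    using ex4 by metis
  define P where "P n e \<longleftrightarrow> (\<exists>\<gamma>. path \<gamma> \<and> pathstart \<gamma> = f (x n) \<and> pathfinish \<gamma> = y n \<and>
      path_image \<gamma> \<subseteq> ball (f (x n)) e)" for n e
  have Pmono: "P n e'" if "P n e" "e \<le> e'" for n e e'
  proof -
    have "ball (f (x n)) e \<subseteq> ball (f (x n)) e'" using that(2) by auto
    then show ?thesis using that(1) unfolding P_def by (meson order_trans)
  qed
  have Ppos: "e > 0" if Pe: "P n e" for n e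
  proof -
    obtain \<gamma> where "path \<gamma>" "pathstart \<gamma> = f (x n)" "path_image \<gamma> \<subseteq> ball (f (x n)) e"
      using Pe unfolding P_def by blast
    then have "f (x n) \<in> ball (f (x n)) e" by (metis pathstart_in_path_image subsetD)
    then show ?thesis by simp
  qed
  have pcX: "path_connected X"
    unfolding path_connected_component
  proof (intro ballI)
    fix a b assume "a \<in> X" "b \<in> X"
    then have "connected_component X a b" using conX by (meson connected_component_def order_refl)
    then show "path_component X a b" using path_component_eq_connected_component[OF lX] by metis
  qed
  have bfX: "bounded (f ` X)" using compact_continuous_image[OF assms(2) cX] compact_imp_bounded by blast
  have Pex: "\<exists>e. P n e" for n
  proof -
    obtain z where z: "z \<in> X" "y n = f z" using assms(7) by blast
    obtain p where p: "path p" "path_image p \<subseteq> X" "pathstart p = x n" "pathfinish p = z"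
      using pcX z(1) assms(4) unfolding path_connected_def by blast
    have pf: "path (f \<circ> p)" using path_continuous_image[OF p(1)] continuous_on_subset[OF assms(2) p(2)] by blast
    have pif: "path_image (f \<circ> p) \<subseteq> f ` X" using p(2) by (auto simp: path_image_compose)
    obtain B where B: "\<forall>u\<in>f ` X. dist (f (x n)) u \<le> B" using bfX bounded_any_center by blast
    have "path_image (f \<circ> p) \<subseteq> ball (f (x n)) (B + 1)" using pif B by fastforce
    moreover have "pathstart (f \<circ> p) = f (x n)" "pathfinish (f \<circ> p) = y n"
      using p z by (simp_all add: pathstart_compose pathfinish_compose)
    ultimately show ?thesis unfolding P_def using pf by blast
  qed
  have Pev: "\<exists>N. \<forall>n\<ge>N. P n e" if epos: "e > 0" for e
  proof -
    obtain d where d: "d > 0" "\<forall>u\<in>f ` X. \<forall>v\<in>f ` X. dist u v < d \<longrightarrow>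
       (\<exists>\<gamma>. path \<gamma> \<and> pathstart \<gamma> = u \<and> pathfinish \<gamma> = v \<and> path_image \<gamma> \<subseteq> ball u e)"
      using uniform_paths'[OF cX lX assms(2) epos] by blast
    obtain N where N: "\<forall>n\<ge>N. norm (dist (f (x n)) (y n) - 0) < d"
      using LIMSEQ_D[OF assms(8) d(1)] by blast
    have "P n e" if nN: "n \<ge> N" for n
    proof -
      have dd: "dist (f (x n)) (y n) < d" using N nN by simp
      have "f (x n) \<in> f ` X" using assms(4) by (rule imageI)
      then show ?thesis using d(2) assms(7)[of n] dd unfolding P_def by blast
    qed
    then show ?thesis by blast
  qed
  define E where "E n = Inf {e. P n e} + inverse (real (Suc n))" for n
  have bdd: "bdd_below {e. P n e}" for n using Ppos by (auto intro!: bdd_belowI[of _ 0] less_imp_le)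
  have PE: "P n (E n)" for n
  proof -
    have "Inf {e. P n e} < E n" by (simp add: E_def)
    then obtain e where "e \<in> {e. P n e}" "e < E n" using Pex[of n] by (metis cInf_lessD empty_Collect_eq)
    then show ?thesis using Pmono by auto
  qed
  have Inf0: "Inf {e. P n e} \<ge> 0" for n using Pex[of n] Ppos
    by (metis (mono_tags, lifting) cInf_greatest empty_Collect_eq less_imp_le mem_Collect_eq)
  have E0: "E \<longlonglongrightarrow> 0"
  proof (rule LIMSEQ_I)
    fix r :: real assume r: "r > 0"
    obtain N1 where N1: "\<forall>n\<ge>N1. P n (r/2)" using Pev[of "r/2"] r by auto
    obtain N2 where N2: "\<forall>n\<ge>N2. norm (inverse (real (Suc n)) - 0) < r/2"
      using LIMSEQ_inverse_real_of_nat[unfolded LIMSEQ_iff] r by (metis half_gt_zero)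
    show "\<exists>no. \<forall>n\<ge>no. norm (E n - 0) < r"
    proof (intro exI allI impI)
      fix n assume n: "max N1 N2 \<le> n"
      have "Inf {e. P n e} \<le> r/2" using N1 n bdd[of n] by (intro cInf_lower) auto
      moreover have "inverse (real (Suc n)) < r/2" using N2 n by auto
      ultimately show "norm (E n - 0) < r" using Inf0[of n] by (simp add: E_def)
    qed
  qed
  obtain \<gamma> where gam: "\<And>n. path (\<gamma> n)" "\<And>n. pathstart (\<gamma> n) = f (x n)" "\<And>n. pathfinish (\<gamma> n) = y n"
    "\<And>n. path_image (\<gamma> n) \<subseteq> ball (f (x n)) (E n)"
    using PE unfolding P_def by metis
  define \<epsilon> where "\<epsilon> n = min (\<rho> n / 3) (ud n / 3)" for n
  have ep: "\<epsilon> n > 0" for n using rho(1) ud(1) by (simp add: \<epsilon>_def)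
  have ex5: "\<exists>\<delta> R. \<delta> > 0 \<and> \<delta> \<le> \<epsilon> n \<and> continuous_on (cball (x n) \<delta>) R \<and>
      R ` cball (x n) \<delta> \<subseteq> X \<inter> cball (x n) (\<epsilon> n) \<and> (\<forall>q \<in> X \<inter> cball (x n) \<delta>. R q = q)" for n
  proof -
    have e2: "\<eta> n / 2 > 0" using eta(1) by simp
    show ?thesis
    proof (rule local_retract[OF Uform[of n] Ufr(3)[of n] Ufr(4)[of n] e2 loc[of _ n] UX[of n] ep[of n]])
      fix \<delta> R assume "\<delta> > 0" "\<delta> \<le> \<epsilon> n" "continuous_on (cball (x n) \<delta>) R"
       "R ` cball (x n) \<delta> \<subseteq> X \<inter> cball (x n) (\<epsilon> n)" "\<And>q. q \<in> X \<inter> cball (x n) \<delta> \<Longrightarrow> R q = q"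
      then show ?thesis by blast
    qed
  qed
  obtain \<delta> R where dR: "\<And>n. \<delta> n > 0" "\<And>n. \<delta> n \<le> \<epsilon> n" "\<And>n. continuous_on (cball (x n) (\<delta> n)) (R n)"
     "\<And>n. R n ` cball (x n) (\<delta> n) \<subseteq> X \<inter> cball (x n) (\<epsilon> n)" "\<And>n q. q \<in> X \<inter> cball (x n) (\<delta> n) \<Longrightarrow> R n q = q"
    using ex5 by metis
  have ex6: "\<exists>Hn :: real \<times> (real^2) \<Rightarrow> 'b. continuous_on ({0..1} \<times> X) Hn \<and>
    (\<forall>p. p \<in> X \<longrightarrow> Hn (0,p) = f p) \<and>
    (\<forall>t p. t \<in> {0..1} \<longrightarrow> p \<in> X \<longrightarrow> p \<notin> ball (x n) (\<delta> n) \<longrightarrow> Hn (t,p) = f p) \<and>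
    Hn (1, x n) = y n \<and>
    (\<forall>t p. t \<in> {0..1} \<longrightarrow> p \<in> X \<longrightarrow>
        Hn (t,p) = f p \<or> (p \<in> cball (x n) (\<delta> n) \<and> (Hn (t,p) \<in> f ` (X \<inter> cball (x n) (\<epsilon> n)) \<or> Hn (t,p) \<in> path_image (\<gamma> n))))" for n
  proof -
    show ?thesis
    proof (rule local_homotopy[OF assms(2) assms(4)[of n] dR(1)[where n=n] dR(3)[where n=n] dR(4)[where n=n]
         dR(5)[where n=n] gam(1)[where n=n] gam(2)[where n=n] gam(3)[where n=n]])
      fix Hn :: "real \<times> (real^2) \<Rightarrow> 'b"
      assume h: "continuous_on ({0..1} \<times> X) Hn"
        "\<And>p. p \<in> X \<Longrightarrow> Hn (0,p) = f p"
        "\<And>t p. t \<in> {0..1} \<Longrightarrow> p \<in> X \<Longrightarrow> p \<notin> ball (x n) (\<delta> n) \<Longrightarrow> Hn (t,p) = f p"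
        "Hn (1, x n) = y n"
        "\<And>t p. t \<in> {0..1} \<Longrightarrow> p \<in> X \<Longrightarrow>
          Hn (t,p) = f p \<or> (p \<in> cball (x n) (\<delta> n) \<and> (Hn (t,p) \<in> f ` (X \<inter> cball (x n) (\<epsilon> n)) \<or> Hn (t,p) \<in> path_image (\<gamma> n)))"
      show ?thesis
        by (rule exI[of _ Hn]) (use h in blast)
    qed
  qed
  obtain HH :: "nat \<Rightarrow> real \<times> (real^2) \<Rightarrow> 'b" where HH:
    "\<And>n. continuous_on ({0..1} \<times> X) (HH n)"
    "\<And>n p. p \<in> X \<Longrightarrow> HH n (0,p) = f p"
    "\<And>n t p. t \<in> {0..1} \<Longrightarrow> p \<in> X \<Longrightarrow> p \<notin> ball (x n) (\<delta> n) \<Longrightarrow> HH n (t,p) = f p"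
    "\<And>n. HH n (1, x n) = y n"
    "\<And>n t p. t \<in> {0..1} \<Longrightarrow> p \<in> X \<Longrightarrow>
        HH n (t,p) = f p \<or> (p \<in> cball (x n) (\<delta> n) \<and> (HH n (t,p) \<in> f ` (X \<inter> cball (x n) (\<epsilon> n)) \<or> HH n (t,p) \<in> path_image (\<gamma> n)))"
    using ex6 by metis
  define \<omega> where "\<omega> n = E n + inverse (real (Suc n))" for n
  have om: "\<omega> \<longlonglongrightarrow> 0" unfolding \<omega>_def using tendsto_add[OF E0 LIMSEQ_inverse_real_of_nat] by simp
  have Hb: "dist (HH n (t,p)) (f p) \<le> \<omega> n" if tI: "t \<in> {0..1}" and pI: "p \<in> X" for n t p
  proof -
    have Ep: "E n > 0" using Ppos PE by blast
    have ip: "inverse (real (Suc n)) > 0" by simp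
    have "\<epsilon> n \<le> ud n / 3" by (simp add: \<epsilon>_def)
    then have pe: "\<delta> n + \<epsilon> n < ud n" using dR(2)[of n] ud(1)[of n] by linarith
    consider "HH n (t,p) = f p"
      | "p \<in> cball (x n) (\<delta> n)" "HH n (t,p) \<in> f ` (X \<inter> cball (x n) (\<epsilon> n))"
      | "p \<in> cball (x n) (\<delta> n)" "HH n (t,p) \<in> path_image (\<gamma> n)"
      using HH(5)[OF tI pI] by blast
    then show ?thesis
    proof cases
      case 1
      then show ?thesis using Ep ip by (simp add: \<omega>_def)
    next
      case 2
      then obtain p' where p': "p' \<in> X" "dist (x n) p' \<le> \<epsilon> n" "HH n (t,p) = f p'" by auto
      have "dist p' p \<le> dist p' (x n) + dist (x n) p" by (rule dist_triangle)
      also have "\<dots> < ud n" using p'(2) 2(1) pe by (simp add: dist_commute)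
      finally have "dist (f p') (f p) < inverse (real (Suc n))" using ud(2)[OF pI p'(1)] by blast
      then show ?thesis using p'(3) Ep by (simp add: \<omega>_def)
    next
      case 3
      have "dist (HH n (t,p)) (f (x n)) < E n" using 3(2) gam(4)[of n] by (auto simp: dist_commute)
      moreover have "dist (f (x n)) (f p) < inverse (real (Suc n))"
      proof -
        have "dist (x n) p < ud n" using 3(1) pe ep[of n] by (simp add: dist_commute)
        then show ?thesis using ud(2)[OF assms(4) pI] by (simp add: dist_commute)
      qed
      ultimately show ?thesis using dist_triangle[of "HH n (t,p)" "f p" "f (x n)"] by (simp add: \<omega>_def)
    qed
  qed
  have disj: "ball (x m) (\<delta> m) \<inter> ball (x n) (\<delta> n) = {}" if "m \<noteq> n" for m n
  proof (rule ccontr)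
    assume "ball (x m) (\<delta> m) \<inter> ball (x n) (\<delta> n) \<noteq> {}"
    then obtain p where "dist (x m) p < \<delta> m" "dist (x n) p < \<delta> n" by auto
    then have d: "dist (x m) (x n) < \<delta> m + \<delta> n" using dist_triangle[of "x m" "x n" p] by (simp add: dist_commute)
    have "\<delta> m \<le> \<rho> m / 3" "\<delta> n \<le> \<rho> n / 3" using dR(2) by (simp_all add: \<epsilon>_def)
    moreover have "\<rho> n \<le> dist (x m) (x n)" "\<rho> m \<le> dist (x m) (x n)"
      using rho(2)[OF that] rho(2)[of n m] that by (simp_all add: dist_commute)
    ultimately show False using d dR(1)[of m] dR(1)[of n] by linarith
  qed
  define K where "K = (\<lambda>z. if \<exists>n. snd z \<in> ball (x n) (\<delta> n) then HH (SOME n. snd z \<in> ball (x n) (\<delta> n)) z else f (snd z))"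
  have Kc: "continuous_on ({0..1} \<times> X) K"
    unfolding K_def
    by (rule paste_homotopies[OF assms(2) HH(1) open_ball disj _ Hb om]) (use HH(3) in auto)
  have Kin: "K z = HH n z" if "snd z \<in> ball (x n) (\<delta> n)" for z n
  proof -
    have "(SOME n. snd z \<in> ball (x n) (\<delta> n)) = n"
      using disj that by (metis (mono_tags, lifting) disjoint_iff someI)
    then show ?thesis using that by (auto simp: K_def)
  qed
  have K0: "K (0,p) = f p" if "p \<in> X" for p
  proof (cases "\<exists>n. p \<in> ball (x n) (\<delta> n)")
    case True
    then obtain n where "p \<in> ball (x n) (\<delta> n)" by blast
    then show ?thesis using Kin[of "(0,p)" n] HH(2)[OF that] by simp
  qed (simp add: K_def)
  have K1: "K (1, x n) = y n" for n
    using Kin[of "(1, x n)" n] HH(4)[of n] dR(1)[of n] by simp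
  define g where "g p = K (1,p)" for p
  define h where "h z = (if fst z = 0 then f (snd z) else K z)" for z
  have hc: "continuous_on ({0..1} \<times> X) h"
    using Kc by (rule continuous_on_eq) (auto simp: h_def K0)
  show ?thesis
  proof (intro exI conjI allI)
    show "continuous_on X g" unfolding g_def
      by (rule continuous_on_compose2[OF Kc]) (auto intro: continuous_intros)
    show "g (x n) = y n" for n by (simp add: g_def K1)
    show "homotopic_with_canon (\<lambda>_. True) X UNIV f g"
      unfolding homotopic_with_def
    proof (intro exI conjI)
      show "continuous_map (prod_topology (top_of_set {0..1}) (top_of_set X)) (top_of_set UNIV) h"
        using hc by simp
      show "\<forall>p. h (0, p) = f p" by (simp add: h_def)
      show "\<forall>p. h (1, p) = g p" by (simp add: h_def g_def)
      show "\<forall>t\<in>{0..1}. True" by simp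
    qed
  qed
qed

end
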